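(* Let $\Omega\subset\mathbb{R}^{n+1}$ be an open set satisfying the corkscrew condition with $d$-ADR boundary, $d\in(0,n]$, let $\mathbb{D}$ be a dyadic system on $\partial\Omega$, and let $\mathcal{W}$ and $\mathcal{W}_Q$ ($Q\in\mathbb{D}$) be as below. Then for every $Q\in\mathbb{D}$ and every $\kappa\in(0,\infty)$, $$\sum_{\substack{Q'\in\mathbb{D}_Q\\ \operatorname{dist}(Q',\partial\Omega\setminus Q)\le\kappa\ell(Q')}}\ \sum_{I\in\mathcal{W}_{Q'}}\mathcal{H}^n(\partial I)\le C_\kappa\,\ell(Q)^n,$$ where $C_\kappa$ depends only on $\kappa$, $n$, $d$, the ADR and dyadic constants, and $\eta,K$.
   Context: $d$-ADR: $C^{-1}r^d\le\sigma(B(x,r)\cap\partial\Omega)\le Cr^d$, $\sigma=\mathcal{H}^d\lfloor_{\partial\Omega}$. A dyadic system $\mathbb{D}=\bigcup_k\mathbb{D}_k$ on $\partial\Omega$: nested Borel sets, each $\mathbb{D}_k$ a disjoint partition of $\partial\Omega$, each $Q\in\mathbb{D}_k$ with $B(z_Q,c_12^{-k})\cap\partial\Omega\subset Q\subset B(z_Q,C_12^{-k})\cap\partial\Omega$, each cube the union of at most $N$ children in $\mathbb{D}_{k+1}$, and thin boundaries: $\sigma(\{x\in Q:\operatorname{dist}(x,\partial\Omega\setminus Q)\le\varrho2^{-k}\})\le C_1\varrho^\gamma\sigma(Q)$ for $Q\in\mathbb{D}_k$, $\varrho\in(0,c_1)$; $\ell(Q):=2^{-k}$, $\mathbb{D}_Q$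 is the set of dyadic subcubes of $Q$. $\mathcal{W}$ is a Whitney decomposition of $\Omega$: a family of half-open cubes $I=\prod_{k=1}^{n+1}(a_k,a_k+h]$ ($\ell(I)=h$), pairwise disjoint, with union $\Omega$, such that $4\operatorname{diam}(I)\le\operatorname{dist}(4I,\partial\Omega)\le\operatorname{dist}(I,\partial\Omega)\le40\operatorname{diam}(I)$, and $\frac14\operatorname{diam}I_1\le\operatorname{diam}I_2\le4\operatorname{diam}I_1$ whenever $\overline{I_1}\cap\overline{I_2}\ne\emptyset$. For fixed parameters $0<\eta\ll1\ll K$, $\mathcal{W}_Q:=\{I\in\mathcal{W}:\eta^{1/4}\ell(Q)\le\ell(I)\le K^{1/2}\ell(Q),\ \operatorname{dist}(I,Q)\le K^{1/2}\ell(Q)\}$. *)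

theory Defs
  imports "HOL-Analysis.Analysis"
begin

definition hausdorff_norm :: "real \<Rightarrow> real" where
  "hausdorff_norm s = pi powr (s / 2) / (Gamma (s / 2 + 1) * 2 powr s)"

definition hausdorff_pre :: "real \<Rightarrow> real \<Rightarrow> 'a::euclidean_space set \<Rightarrow> ennreal" where
  "hausdorff_pre s \<delta> E =
     (INF f \<in> {f :: nat \<Rightarrow> 'a set. E \<subseteq> (\<Union>i. f i) \<and>
                 (\<forall>i. bounded (f i) \<and> diameter (f i) \<le> \<delta>)}.
        (\<Sum>i. ennreal (hausdorff_norm s * diameter (f i) powr s)))"

definition hausdorff :: "real \<Rightarrow> 'a::euclidean_space set \<Rightarrow> ennreal" where
  "hausdorff s E = (SUP \<delta> \<in> {0<..}. hausdorff_pre s \<delta> E)"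

text \<open>near A B t means dist(A,B) \<le> t, where the distance to the empty set is infinite.\<close>
definition near :: "'a::metric_space set \<Rightarrow> 'a set \<Rightarrow> real \<Rightarrow> bool" where
  "near A B t \<longleftrightarrow> A \<noteq> {} \<and> B \<noteq> {} \<and> setdist A B \<le> t"

definition below_diam :: "'a::metric_space set \<Rightarrow> real \<Rightarrow> bool" where
  "below_diam E r \<longleftrightarrow> (\<not> bounded E \<or> r < diameter E)"

definition corkscrew :: "'a::euclidean_space set \<Rightarrow> bool" where
  "corkscrew \<Omega> \<longleftrightarrow> (\<exists>c. 0 < c \<and> c < 1 \<and>
     (\<forall>x\<in>frontier \<Omega>. \<forall>r. 0 < r \<and> below_diam (frontier \<Omega>) r \<longrightarrow>
        (\<exists>X. ball X (c * r) \<subseteq> ball x r \<inter> \<Omega>)))"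

definition ADR :: "real \<Rightarrow> real \<Rightarrow> 'a::euclidean_space set \<Rightarrow> bool" where
  "ADR d C E \<longleftrightarrow> C \<ge> 1 \<and> E \<noteq> {} \<and> closed E \<and>
     (\<forall>x\<in>E. \<forall>r. 0 < r \<and> below_diam E r \<longrightarrow>
        ennreal (r powr d / C) \<le> hausdorff d (ball x r \<inter> E) \<and>
        hausdorff d (ball x r \<inter> E) \<le> ennreal (C * r powr d))"

text \<open>Dyadic system on E with levels L (all integers, or all integers \<ge> k0);
  D k is the generation of cubes of side length 2^(-k). sigma = H^d restricted to E.\<close>
definition dyadic_system ::
  "real \<Rightarrow> 'a::euclidean_space set \<Rightarrow> int set \<Rightarrow> (int \<Rightarrow> 'a set set)
     \<Rightarrow> real \<Rightarrow> real \<Rightarrow> nat \<Rightarrow> real \<Rightarrow> bool" where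
  "dyadic_system d E L D c1 C1 N \<gamma> \<longleftrightarrow>
     0 < c1 \<and> c1 \<le> C1 \<and> 0 < \<gamma> \<and>
     (L = UNIV \<or> (\<exists>k0. L = {k0..})) \<and>
     (\<forall>k\<in>L. (\<forall>Q\<in>D k. Q \<in> sets borel \<and> Q \<subseteq> E) \<and> \<Union>(D k) = E \<and>
        (\<forall>Q\<in>D k. \<forall>Q'\<in>D k. Q \<noteq> Q' \<longrightarrow> Q \<inter> Q' = {})) \<and>
     (\<forall>k\<in>L. \<forall>k'\<in>L. k \<le> k' \<longrightarrow> (\<forall>Q\<in>D k. \<forall>Q'\<in>D k'. Q' \<subseteq> Q \<or> Q' \<inter> Q = {})) \<and>
     (\<forall>k\<in>L. \<forall>Q\<in>D k. \<exists>z\<in>E. ball z (c1 * 2 powr (- k)) \<inter> E \<subseteq> Q \<and>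
                              Q \<subseteq> ball z (C1 * 2 powr (- k)) \<inter> E) \<and>
     (\<forall>k\<in>L. \<forall>Q\<in>D k. \<exists>F. F \<subseteq> D (k + 1) \<and> finite F \<and> card F \<le> N \<and> Q = \<Union>F) \<and>
     (\<forall>k\<in>L. \<forall>Q\<in>D k. \<forall>\<rho>. 0 < \<rho> \<and> \<rho> < c1 \<longrightarrow>
        hausdorff d {x\<in>Q. near {x} (E - Q) (\<rho> * 2 powr (- k))}
          \<le> ennreal (C1 * \<rho> powr \<gamma>) * hausdorff d Q)"

text \<open>Dyadic cubes as pairs (level, set); \<ell>(Q) = 2^(-level).\<close>
definition dcubes :: "int set \<Rightarrow> (int \<Rightarrow> 'a set set) \<Rightarrow> (int \<times> 'a set) set" where
  "dcubes L D = {(k, Q). k \<in> L \<and> Q \<in> D k}"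

definition dsubcubes :: "int set \<Rightarrow> (int \<Rightarrow> 'a set set) \<Rightarrow> int \<times> 'a set \<Rightarrow> (int \<times> 'a set) set" where
  "dsubcubes L D Q = {Q' \<in> dcubes L D. fst Q \<le> fst Q' \<and> snd Q' \<subseteq> snd Q}"

definition dlen :: "int \<times> 'a set \<Rightarrow> real" where
  "dlen Q = 2 powr (- fst Q)"

section \<open>Whitney cubes: I = (a,h) stands for prod_i (a_i, a_i + h]\<close>

definition wcube :: "'a::euclidean_space \<times> real \<Rightarrow> 'a set" where
  "wcube I = {x. \<forall>i\<in>Basis. fst I \<bullet> i < x \<bullet> i \<and> x \<bullet> i \<le> fst I \<bullet> i + snd I}"

text \<open>The concentric cube with t times the side length.\<close>
definition wdilate :: "real \<Rightarrow> 'a::euclidean_space \<times> real \<Rightarrow> 'a \<times> real" where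
  "wdilate t I = (fst I - ((t - 1) * snd I / 2) *\<^sub>R One, t * snd I)"

definition whitney :: "'a::euclidean_space set \<Rightarrow> ('a \<times> real) set \<Rightarrow> bool" where
  "whitney \<Omega> W \<longleftrightarrow>
     (\<forall>I\<in>W. snd I > 0) \<and>
     (\<forall>I\<in>W. \<forall>J\<in>W. I \<noteq> J \<longrightarrow> wcube I \<inter> wcube J = {}) \<and>
     (\<Union>I\<in>W. wcube I) = \<Omega> \<and>
     (\<forall>I\<in>W. 4 * diameter (wcube I) \<le> setdist (wcube (wdilate 4 I)) (frontier \<Omega>) \<and>
             setdist (wcube (wdilate 4 I)) (frontier \<Omega>) \<le> setdist (wcube I) (frontier \<Omega>) \<and>
             setdist (wcube I) (frontier \<Omega>) \<le> 40 * diameter (wcube I)) \<and>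
     (\<forall>I\<in>W. \<forall>J\<in>W. closure (wcube I) \<inter> closure (wcube J) \<noteq> {} \<longrightarrow>
        diameter (wcube I) / 4 \<le> diameter (wcube J) \<and>
        diameter (wcube J) \<le> 4 * diameter (wcube I))"

definition WQ :: "('a::euclidean_space \<times> real) set \<Rightarrow> real \<Rightarrow> real \<Rightarrow> int \<times> 'a set \<Rightarrow> ('a \<times> real) set" where
  "WQ W \<eta> K Q = {I\<in>W. \<eta> powr (1/4) * dlen Q \<le> snd I \<and> snd I \<le> sqrt K * dlen Q \<and>
                        setdist (wcube I) (snd Q) \<le> sqrt K * dlen Q}"

end

theory Submission
  imports Defs
begin


lemma INF_ennreal_add_const_gen:
  fixes f :: "'b \<Rightarrow> ennreal"
  shows "(INF i\<in>I. f i + c) = (INF i\<in>I. f i) + c"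
proof (cases "I = {}")
  case True then show ?thesis by simp
next
  case False
  then show ?thesis
  using continuous_at_Inf_mono[of "\<lambda>x. x + c" "f`I"]
  using continuous_add[of "at_right (Inf (f ` I))", of "\<lambda>x. x" "\<lambda>x. c"]
  by (auto simp: mono_def image_comp)
qed

lemma INF_ennreal_const_add_gen:
  fixes f :: "'b \<Rightarrow> ennreal"
  shows "(INF i\<in>I. c + f i) = c + (INF i\<in>I. f i)"
  using INF_ennreal_add_const_gen[of f c I] by (simp add: ac_simps)

lemma hausdorff_norm_nonneg: "s \<ge> 0 \<Longrightarrow> hausdorff_norm s \<ge> 0"
  unfolding hausdorff_norm_def
  by (intro divide_nonneg_pos mult_pos_pos) (auto intro: Gamma_real_pos)

lemma hausdorff_pre_mono_set:
  assumes "A \<subseteq> B" shows "hausdorff_pre s \<delta> A \<le> hausdorff_pre s \<delta> B"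
  unfolding hausdorff_pre_def
  by (rule INF_superset_mono) (use assms in auto)

lemma hausdorff_mono:
  assumes "A \<subseteq> B" shows "hausdorff s A \<le> hausdorff s B"
  unfolding hausdorff_def
  by (rule SUP_mono) (use hausdorff_pre_mono_set[OF assms] in auto)

lemma hausdorff_pre_anti:
  assumes "\<delta> \<le> \<delta>'" shows "hausdorff_pre s \<delta>' A \<le> hausdorff_pre s \<delta> A"
  unfolding hausdorff_pre_def
  by (rule INF_superset_mono) (use assms in \<open>auto intro: order_trans\<close>)

lemma hausdorff_pre_le_cover:
  assumes "A \<subseteq> (\<Union>i. f i)" "\<And>i. bounded (f i)" "\<And>i. diameter (f i) \<le> \<delta>"
  shows "hausdorff_pre s \<delta> A \<le> (\<Sum>i. ennreal (hausdorff_norm s * diameter (f i) powr s))"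
  unfolding hausdorff_pre_def by (rule INF_lower) (use assms in auto)

lemma hausdorff_le:
  assumes "\<And>\<delta>. \<delta> > 0 \<Longrightarrow> hausdorff_pre s \<delta> A \<le> b"
  shows "hausdorff s A \<le> b"
  unfolding hausdorff_def by (rule SUP_least) (use assms in auto)

lemma hausdorff_ge:
  assumes "\<delta> > 0" shows "hausdorff_pre s \<delta> A \<le> hausdorff s A"
  unfolding hausdorff_def by (rule SUP_upper) (use assms in auto)

lemma suminf_interleave_le:
  fixes f g :: "nat \<Rightarrow> ennreal"
  shows "(\<Sum>i. (if even i then f (i div 2) else g (i div 2))) \<le> suminf f + suminf g"
proof -
  let ?h = "\<lambda>i. if even i then f (i div 2) else g (i div 2)"
  have ps: "(\<Sum>i<2*m. ?h i) = (\<Sum>i<m. f i) + (\<Sum>i<m. g i)" for m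
    by (induction m) (auto simp: ac_simps)
  have "(\<Sum>i<m. ?h i) \<le> suminf f + suminf g" for m
  proof -
    have "(\<Sum>i<m. ?h i) \<le> (\<Sum>i<2*m. ?h i)" by (rule sum_mono2) auto
    also have "\<dots> = (\<Sum>i<m. f i) + (\<Sum>i<m. g i)" by (rule ps)
    also have "\<dots> \<le> suminf f + suminf g"
      by (intro add_mono sum_le_suminf) auto
    finally show ?thesis .
  qed
  then show ?thesis unfolding suminf_eq_SUP[of ?h] by (rule SUP_least)
qed

lemma hausdorff_pre_Un:
  "hausdorff_pre s \<delta> (A \<union> B) \<le> hausdorff_pre s \<delta> A + hausdorff_pre s \<delta> B"
proof -
  let ?C = "\<lambda>E. {f :: nat \<Rightarrow> 'a set. E \<subseteq> (\<Union>i. f i) \<and> (\<forall>i. bounded (f i) \<and> diameter (f i) \<le> \<delta>)}"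
  let ?S = "\<lambda>f. (\<Sum>i. ennreal (hausdorff_norm s * diameter (f i) powr s))"
  have key: "hausdorff_pre s \<delta> (A \<union> B) \<le> ?S f + ?S g" if f: "f \<in> ?C A" and g: "g \<in> ?C B" for f g
  proof -
    define h where "h i = (if even i then f (i div 2) else g (i div 2))" for i
    have "A \<union> B \<subseteq> (\<Union>i. h i)"
    proof
      fix x assume "x \<in> A \<union> B"
      then show "x \<in> (\<Union>i. h i)"
      proof
        assume "x \<in> A" then obtain i where "x \<in> f i" using f by auto
        then have "x \<in> h (2*i)" by (simp add: h_def)
        then show ?thesis by blast
      next
        assume "x \<in> B" then obtain i where "x \<in> g i" using g by auto
        then have "x \<in> h (2*i+1)" by (simp add: h_def)
        then show ?thesis by blast
      qed
    qed
    moreover have "bounded (h i) \<and> diameter (h i) \<le> \<delta>" for i using f g by (auto simp: h_def)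
    ultimately have "hausdorff_pre s \<delta> (A \<union> B) \<le> ?S h"
      by (intro hausdorff_pre_le_cover) auto
    also have "?S h = (\<Sum>i. (if even i then (\<lambda>i. ennreal (hausdorff_norm s * diameter (f i) powr s)) (i div 2) else (\<lambda>i. ennreal (hausdorff_norm s * diameter (g i) powr s)) (i div 2)))"
      by (rule suminf_cong) (auto simp: h_def)
    also have "\<dots> \<le> ?S f + ?S g" by (rule suminf_interleave_le)
    finally show ?thesis .
  qed
  have "hausdorff_pre s \<delta> (A \<union> B) \<le> (INF f\<in>?C A. INF g\<in>?C B. ?S f + ?S g)"
    by (intro INF_greatest key)
  also have "\<dots> = (INF f\<in>?C A. ?S f + (INF g\<in>?C B. ?S g))"
    by (intro INF_cong refl) (rule INF_ennreal_const_add_gen)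
  also have "\<dots> = (INF f\<in>?C A. ?S f) + (INF g\<in>?C B. ?S g)"
    by (rule INF_ennreal_add_const_gen)
  finally show ?thesis unfolding hausdorff_pre_def .
qed

lemma hausdorff_Un: "hausdorff s (A \<union> B) \<le> hausdorff s A + hausdorff s B"
proof (rule hausdorff_le)
  fix \<delta> :: real assume "\<delta> > 0"
  have "hausdorff_pre s \<delta> (A \<union> B) \<le> hausdorff_pre s \<delta> A + hausdorff_pre s \<delta> B"
    by (rule hausdorff_pre_Un)
  also have "\<dots> \<le> hausdorff s A + hausdorff s B"
    by (intro add_mono hausdorff_ge \<open>\<delta> > 0\<close>)
  finally show "hausdorff_pre s \<delta> (A \<union> B) \<le> hausdorff s A + hausdorff s B" .
qed

lemma hausdorff_empty: "hausdorff s ({}::'a::euclidean_space set) = 0"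
proof -
  have "hausdorff_pre s \<delta> ({}::'a set) \<le> 0" if "\<delta> > 0" for \<delta> :: real
  proof -
    have "hausdorff_pre s \<delta> ({}::'a set) \<le> (\<Sum>i. ennreal (hausdorff_norm s * diameter ((\<lambda>i. {}::'a set) i) powr s))"
      by (rule hausdorff_pre_le_cover) (use that in auto)
    then show ?thesis by simp
  qed
  then show ?thesis unfolding hausdorff_def
    by (intro antisym SUP_least) auto
qed

lemma hausdorff_Union:
  assumes "finite F"
  shows "hausdorff s (\<Union>F) \<le> (\<Sum>P\<in>F. hausdorff s P)"
  using assms
proof (induction F rule: finite_induct)
  case empty
  show ?case by (simp add: hausdorff_empty)
next
  case (insert P F)
  have "hausdorff s (\<Union>(insert P F)) \<le> hausdorff s P + hausdorff s (\<Union>F)"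
    using hausdorff_Un[of s P "\<Union>F"] by simp
  also have "\<dots> \<le> hausdorff s P + (\<Sum>P\<in>F. hausdorff s P)"
    using insert.IH by (rule add_left_mono)
  finally show ?case using insert by simp
qed

lemma hausdorff_pre_sep:
  assumes e: "\<delta> < e" and d0: "0 \<le> \<delta>" and sep: "\<And>x y. x \<in> A \<Longrightarrow> y \<in> B \<Longrightarrow> e \<le> dist x y"
  shows "hausdorff_pre s \<delta> A + hausdorff_pre s \<delta> B \<le> hausdorff_pre s \<delta> (A \<union> B)"
  unfolding hausdorff_pre_def[of s \<delta> "A \<union> B"]
proof (rule INF_greatest, clarify)
  fix h :: "nat \<Rightarrow> 'a set"
  assume cov: "A \<union> B \<subseteq> (\<Union>i. h i)" and hb: "\<forall>i. bounded (h i) \<and> diameter (h i) \<le> \<delta>"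
  define f where "f i = (if h i \<inter> A = {} then {} else h i)" for i
  define g where "g i = (if h i \<inter> B = {} then {} else h i)" for i
  let ?t = "\<lambda>X. ennreal (hausdorff_norm s * diameter X powr s)"
  have "hausdorff_pre s \<delta> A \<le> (\<Sum>i. ?t (f i))"
    by (rule hausdorff_pre_le_cover) (use cov hb d0 in \<open>auto simp: f_def, blast\<close>)
  moreover have "hausdorff_pre s \<delta> B \<le> (\<Sum>i. ?t (g i))"
    by (rule hausdorff_pre_le_cover) (use cov hb d0 in \<open>auto simp: g_def, blast\<close>)
  ultimately have "hausdorff_pre s \<delta> A + hausdorff_pre s \<delta> B \<le> (\<Sum>i. ?t (f i)) + (\<Sum>i. ?t (g i))"
    by (rule add_mono)
  also have "\<dots> = (\<Sum>i. ?t (f i) + ?t (g i))" by (rule suminf_add) auto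
  also have "\<dots> \<le> (\<Sum>i. ?t (h i))"
  proof (rule suminf_le)
    fix i
    have "\<not> (h i \<inter> A \<noteq> {} \<and> h i \<inter> B \<noteq> {})"
    proof
      assume "h i \<inter> A \<noteq> {} \<and> h i \<inter> B \<noteq> {}"
      then obtain x y where "x \<in> h i" "x \<in> A" "y \<in> h i" "y \<in> B" by blast
      then have "dist x y \<le> diameter (h i)" using hb diameter_bounded_bound by blast
      also have "\<dots> \<le> \<delta>" using hb by auto
      finally show False using sep[OF \<open>x \<in> A\<close> \<open>y \<in> B\<close>] e by linarith
    qed
    then show "?t (f i) + ?t (g i) \<le> ?t (h i)" by (auto simp: f_def g_def)
  qed auto
  finally show "hausdorff_pre s \<delta> A + hausdorff_pre s \<delta> B \<le> (\<Sum>i. ?t (h i))" .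
qed

lemma hausdorff_sep:
  assumes e: "0 < e" and sep: "\<And>x y. x \<in> A \<Longrightarrow> y \<in> B \<Longrightarrow> e \<le> dist x y"
  shows "hausdorff s A + hausdorff s B \<le> hausdorff s (A \<union> B)"
proof -
  have "hausdorff_pre s \<delta>1 A + hausdorff_pre s \<delta>2 B \<le> hausdorff s (A \<union> B)"
    if "\<delta>1 > 0" "\<delta>2 > 0" for \<delta>1 \<delta>2
  proof -
    define \<delta> where "\<delta> = min (min \<delta>1 \<delta>2) (e/2)"
    have "\<delta> > 0" "\<delta> < e" "\<delta> \<le> \<delta>1" "\<delta> \<le> \<delta>2" using that e by (auto simp: \<delta>_def)
    have "hausdorff_pre s \<delta>1 A + hausdorff_pre s \<delta>2 B \<le> hausdorff_pre s \<delta> A + hausdorff_pre s \<delta> B"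
      by (intro add_mono hausdorff_pre_anti) fact+
    also have "\<dots> \<le> hausdorff_pre s \<delta> (A \<union> B)" by (rule hausdorff_pre_sep) (use \<open>\<delta> > 0\<close> \<open>\<delta> < e\<close> sep in auto)
    also have "\<dots> \<le> hausdorff s (A \<union> B)" by (rule hausdorff_ge) fact
    finally show ?thesis .
  qed
  then have "(SUP \<delta>1\<in>{0<..}. SUP \<delta>2\<in>{0<..}. hausdorff_pre s \<delta>1 A + hausdorff_pre s \<delta>2 B) \<le> hausdorff s (A \<union> B)"
    by (intro SUP_least) auto
  moreover have "(SUP \<delta>1\<in>{0<..}. SUP \<delta>2\<in>{0<..}. hausdorff_pre s \<delta>1 A + hausdorff_pre s \<delta>2 B) = hausdorff s A + hausdorff s B"
    unfolding hausdorff_def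
    by (subst ennreal_SUP_add_left[symmetric], force) (subst ennreal_SUP_add_right, force, rule refl)
  ultimately show ?thesis by simp
qed



lemma hausdorff_sep_family:
  assumes "finite X" "0 < e"
    and sep: "\<And>i j x y. i \<in> X \<Longrightarrow> j \<in> X \<Longrightarrow> i \<noteq> j \<Longrightarrow> x \<in> f i \<Longrightarrow> y \<in> f j \<Longrightarrow> e \<le> dist x y"
  shows "(\<Sum>i\<in>X. hausdorff s (f i)) \<le> hausdorff s (\<Union>i\<in>X. f i)"
  using assms(1) sep
proof (induction X rule: finite_induct)
  case empty
  then show ?case by simp
next
  case (insert i X)
  have "(\<Sum>i\<in>insert i X. hausdorff s (f i)) = hausdorff s (f i) + (\<Sum>i\<in>X. hausdorff s (f i))"
    using insert by simp
  also have "\<dots> \<le> hausdorff s (f i) + hausdorff s (\<Union>i\<in>X. f i)"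
    using insert.IH insert.prems by (intro add_left_mono) blast
  also have "\<dots> \<le> hausdorff s (f i \<union> (\<Union>i\<in>X. f i))"
  proof (rule hausdorff_sep[OF \<open>0 < e\<close>])
    fix x y assume "x \<in> f i" "y \<in> (\<Union>i\<in>X. f i)"
    then obtain j where "j \<in> X" "y \<in> f j" by auto
    then show "e \<le> dist x y" using insert.prems[of i j x y] insert.hyps \<open>x \<in> f i\<close> by auto
  qed
  finally show ?case by simp
qed

lemma grid_idx:
  fixes u h :: real and m :: nat
  assumes "0 \<le> u" "u \<le> h" "0 < h" "1 \<le> m"
  shows "\<exists>k<m. real k * h / m \<le> u \<and> u \<le> (real k + 1) * h / m"
proof -
  define t where "t = u * m / h"
  have t0: "0 \<le> t" and tm: "t \<le> m" using assms by (auto simp: t_def field_simps)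
  show ?thesis
  proof (cases "t < m")
    case True
    define k where "k = nat \<lfloor>t\<rfloor>"
    have "real k \<le> t" "t < real k + 1" using t0 by (auto simp: k_def)
    moreover have "k < m" using True t0 unfolding k_def by (simp add: nat_less_iff floor_less_iff)
    ultimately show ?thesis using assms
      by (intro exI[of _ k]) (auto simp: t_def field_simps)
  next
    case False
    then have "t = m" using tm by simp
    then show ?thesis using assms
      by (intro exI[of _ "m - 1"]) (auto simp: t_def field_simps of_nat_diff)
  qed
qed

lemma wcube_frontier_sub:
  assumes "0 < h"
  shows "frontier (wcube (a, h)) \<subseteq> cbox a (a + h *\<^sub>R One) - box a (a + h *\<^sub>R One)"
proof -
  have "wcube (a, h) \<subseteq> cbox a (a + h *\<^sub>R One)"
    by (auto simp: wcube_def mem_box inner_simps less_imp_le)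
  then have "closure (wcube (a, h)) \<subseteq> cbox a (a + h *\<^sub>R One)"
    by (intro closure_minimal) auto
  moreover have "box a (a + h *\<^sub>R One) \<subseteq> wcube (a, h)"
    by (auto simp: wcube_def mem_box inner_simps less_imp_le)
  then have "box a (a + h *\<^sub>R One) \<subseteq> interior (wcube (a, h))"
    by (intro interior_maximal) auto
  ultimately show ?thesis unfolding frontier_def by auto
qed

definition cell :: "'a::euclidean_space \<Rightarrow> real \<Rightarrow> nat \<Rightarrow> 'a \<times> bool \<times> ('a \<Rightarrow> nat) \<Rightarrow> 'a set" where
  "cell a h m = (\<lambda>(i, s, g). {x. x \<bullet> i = a \<bullet> i + (if s then h else 0) \<and>
      (\<forall>j\<in>Basis - {i}. a \<bullet> j + real (g j) * h / m \<le> x \<bullet> j \<and> x \<bullet> j \<le> a \<bullet> j + (real (g j) + 1) * h / m)})"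

lemma cell_diam:
  fixes i :: "'a::euclidean_space"
  assumes "DIM('a::euclidean_space) = Suc n" "i \<in> Basis" "0 < h" "1 \<le> m"
    and "x \<in> cell a h m (i, s, g)" "y \<in> cell a h m (i, s, g)"
  shows "dist x y \<le> real n * h / m"
proof -
  have "dist x y = norm (x - y)" by (simp add: dist_norm)
  also have "\<dots> \<le> (\<Sum>b\<in>Basis. \<bar>(x - y) \<bullet> b\<bar>)" by (rule norm_le_l1)
  also have "\<dots> = \<bar>(x - y) \<bullet> i\<bar> + (\<Sum>b\<in>Basis - {i}. \<bar>(x - y) \<bullet> b\<bar>)"
    using assms(2) by (simp add: sum.remove)
  also have "\<bar>(x - y) \<bullet> i\<bar> = 0" using assms(5,6) by (auto simp: cell_def inner_simps)
  also have "(\<Sum>b\<in>Basis - {i}. \<bar>(x - y) \<bullet> b\<bar>) \<le> of_nat (card (Basis - {i} :: 'a set)) * (h / m)"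
  proof (rule sum_bounded_above)
    fix b assume b: "b \<in> Basis - {i}"
    then have "a \<bullet> b + real (g b) * h / m \<le> x \<bullet> b" "x \<bullet> b \<le> a \<bullet> b + (real (g b) + 1) * h / m"
      "a \<bullet> b + real (g b) * h / m \<le> y \<bullet> b" "y \<bullet> b \<le> a \<bullet> b + (real (g b) + 1) * h / m"
      using assms(5,6) by (auto simp: cell_def)
    moreover have "(real (g b) + 1) * h / m = real (g b) * h / m + h / m" by (simp add: distrib_right add_divide_distrib)
    ultimately show "\<bar>(x - y) \<bullet> b\<bar> \<le> h / m" unfolding inner_diff_left abs_le_iff by linarith
  qed
  also have "card (Basis - {i} :: 'a set) = n" using assms(1,2) by (simp add: card_Diff_singleton)
  finally show ?thesis by simp
qed

lemma cell_bounded: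
  fixes i :: "'a::euclidean_space"
  assumes "DIM('a::euclidean_space) = Suc n" "i \<in> Basis" "0 < h" "1 \<le> m"
  shows "bounded (cell a h m (i, s, g))" "diameter (cell a h m (i, s, g)) \<le> real n * h / m"
proof -
  let ?C = "cell a h m (i, s, g)"
  show b: "bounded ?C"
  proof (cases "?C = {}")
    case False
    then obtain x where "x \<in> ?C" by blast
    then show ?thesis unfolding bounded_def using cell_diam[OF assms] by blast
  qed simp
  show "diameter ?C \<le> real n * h / m"
    using cell_diam[OF assms] assms by (intro diameter_le) (auto simp: dist_norm)
qed

lemma cell_cover:
  assumes "0 < h" "1 \<le> m" "x \<in> frontier (wcube (a, h))"
  shows "\<exists>t \<in> Sigma Basis (\<lambda>i. UNIV \<times> PiE (Basis - {i}) (\<lambda>_. {..<m})). x \<in> cell a h m t"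
proof -
  have x: "x \<in> cbox a (a + h *\<^sub>R One)" "x \<notin> box a (a + h *\<^sub>R One)"
    using wcube_frontier_sub[OF assms(1)] assms(3) by auto
  then have bnd: "\<forall>j\<in>Basis. a \<bullet> j \<le> x \<bullet> j \<and> x \<bullet> j \<le> a \<bullet> j + h"
    by (auto simp: mem_box inner_simps)
  from x obtain i where i: "i \<in> Basis" "x \<bullet> i = a \<bullet> i \<or> x \<bullet> i = a \<bullet> i + h"
    by (force simp: mem_box inner_simps)
  define s where "s = (x \<bullet> i \<noteq> a \<bullet> i)"
  have "\<forall>j\<in>Basis - {i}. \<exists>k<m. real k * h / m \<le> x \<bullet> j - a \<bullet> j \<and> x \<bullet> j - a \<bullet> j \<le> (real k + 1) * h / m"
    using bnd assms by (intro ballI grid_idx) auto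
  then obtain g0 where g0: "\<forall>j\<in>Basis - {i}. g0 j < m \<and> real (g0 j) * h / m \<le> x \<bullet> j - a \<bullet> j \<and> x \<bullet> j - a \<bullet> j \<le> (real (g0 j) + 1) * h / m"
    by metis
  define g where "g = restrict g0 (Basis - {i})"
  have "(i, s, g) \<in> Sigma Basis (\<lambda>i. UNIV \<times> PiE (Basis - {i}) (\<lambda>_. {..<m}))"
    using i g0 by (auto simp: g_def)
  moreover have "x \<in> cell a h m (i, s, g)"
  proof -
    have "x \<bullet> i = a \<bullet> i + (if s then h else 0)" using i by (auto simp: s_def)
    moreover have "a \<bullet> j + real (g j) * h / m \<le> x \<bullet> j \<and> x \<bullet> j \<le> a \<bullet> j + (real (g j) + 1) * h / m"
      if "j \<in> Basis - {i}" for j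
      using g0 that unfolding g_def restrict_apply' [OF that] by (metis diff_le_eq le_diff_eq add.commute)
    ultimately show ?thesis by (auto simp: cell_def)
  qed
  ultimately show ?thesis by blast
qed

lemma hausdorff_cube_frontier:
  assumes dim: "DIM('a::euclidean_space) = Suc n" and n1: "1 \<le> n" and h: "0 < h"
  shows "hausdorff (real n) (frontier (wcube ((a::'a), h)))
           \<le> ennreal (2 * real (Suc n) * hausdorff_norm (real n) * real n ^ n * h ^ n)"
proof (rule hausdorff_le)
  fix \<delta> :: real assume "\<delta> > 0"
  define m :: nat where "m = nat \<lceil>real n * h / \<delta>\<rceil> + 1"
  have m1: "1 \<le> m" by (simp add: m_def)
  have "real n * h / \<delta> \<le> real m" unfolding m_def by linarith
  then have mdel: "real n * h / m \<le> \<delta>" using \<open>\<delta> > 0\<close> m1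
    by (auto simp: field_simps)
  define X where "X = Sigma Basis (\<lambda>i::'a. (UNIV::bool set) \<times> PiE (Basis - {i}) (\<lambda>_. {..<m}))"
  have finX: "finite X" unfolding X_def by (intro finite_SigmaI finite_cartesian_product finite_PiE) auto
  have cardX: "card X = Suc n * (2 * m ^ n)"
  proof -
    have "card X = (\<Sum>i\<in>(Basis::'a set). card ((UNIV::bool set) \<times> PiE (Basis - {i}) (\<lambda>_. {..<m})))"
      unfolding X_def by (rule card_SigmaI) (auto intro!: finite_PiE)
    also have "\<dots> = (\<Sum>i\<in>(Basis::'a set). 2 * m ^ n)"
    proof (rule sum.cong[OF refl])
      fix i :: 'a assume "i \<in> Basis"
      then have "card (Basis - {i} :: 'a set) = n" using dim by (simp add: card_Diff_singleton)
      then show "card ((UNIV::bool set) \<times> PiE (Basis - {i}) (\<lambda>_. {..<m})) = 2 * m ^ n"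
        by (simp add: card_cartesian_product card_PiE)
    qed
    also have "\<dots> = Suc n * (2 * m ^ n)" using dim by simp
    finally show ?thesis .
  qed
  obtain e where e: "bij_betw e {..<card X} X"
    using ex_bij_betw_nat_finite[OF finX] atLeast0LessThan by metis
  define f where "f k = (if k < card X then cell a h m (e k) else {})" for k
  have cellprops: "bounded (cell a h m t) \<and> diameter (cell a h m t) \<le> real n * h / m" if "t \<in> X" for t
    using that cell_bounded[OF dim _ h m1] by (auto simp: X_def)
  have cov: "frontier (wcube (a, h)) \<subseteq> (\<Union>k. f k)"
  proof
    fix x assume "x \<in> frontier (wcube (a, h))"
    then obtain t where t: "t \<in> X" "x \<in> cell a h m t" using cell_cover[OF h m1] unfolding X_def by blast
    then obtain k where "k < card X" "e k = t" using e by (metis bij_betw_iff_bijections lessThan_iff)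
    then show "x \<in> (\<Union>k. f k)" using t by (auto simp: f_def)
  qed
  have fb: "bounded (f k) \<and> diameter (f k) \<le> \<delta>" for k
  proof (cases "k < card X")
    case True
    then have "e k \<in> X" using e by (auto simp: bij_betw_def)
    then show ?thesis using cellprops[of "e k"] mdel True by (auto simp: f_def)
  qed (use \<open>\<delta> > 0\<close> in \<open>auto simp: f_def\<close>)
  let ?t = "\<lambda>k. ennreal (hausdorff_norm (real n) * diameter (f k) powr real n)"
  have hn: "hausdorff_norm (real n) \<ge> 0" by (rule hausdorff_norm_nonneg) simp
  have "hausdorff_pre (real n) \<delta> (frontier (wcube (a, h))) \<le> (\<Sum>k. ?t k)"
    by (rule hausdorff_pre_le_cover) (use cov fb in auto)
  also have "(\<Sum>k. ?t k) = (\<Sum>k<card X. ?t k)"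
    by (rule suminf_finite) (auto simp: f_def)
  also have "\<dots> \<le> of_nat (card {..<card X}) * ennreal (hausdorff_norm (real n) * (real n * h / m) ^ n)"
  proof (rule sum_bounded_above)
    fix k assume "k \<in> {..<card X}"
    then have "e k \<in> X" using e by (auto simp: bij_betw_def)
    then have d: "diameter (f k) \<le> real n * h / m" "0 \<le> diameter (f k)"
      using cellprops[of "e k"] \<open>k \<in> {..<card X}\<close> by (auto simp: f_def diameter_ge_0)
    have "diameter (f k) powr real n \<le> (real n * h / m) powr real n"
      by (rule powr_mono2) (use d in auto)
    also have "\<dots> = (real n * h / m) ^ n" using n1 h m1 by (subst powr_realpow) auto
    finally show "?t k \<le> ennreal (hausdorff_norm (real n) * (real n * h / m) ^ n)"
      using hn by (intro ennreal_leI mult_left_mono) auto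
  qed
  also have "\<dots> = ennreal (real (card X) * (hausdorff_norm (real n) * (real n * h / m) ^ n))"
    using hn h by (simp add: ennreal_mult ennreal_of_nat_eq_real_of_nat)
  also have "real (card X) * (hausdorff_norm (real n) * (real n * h / m) ^ n)
      = 2 * real (Suc n) * hausdorff_norm (real n) * real n ^ n * h ^ n"
    using m1 unfolding cardX by (simp add: power_divide power_mult_distrib field_simps)
  finally show "hausdorff_pre (real n) \<delta> (frontier (wcube (a, h)))
      \<le> ennreal (2 * real (Suc n) * hausdorff_norm (real n) * real n ^ n * h ^ n)" .
qed



lemma box_in_wcube: "box a (a + h *\<^sub>R One) \<subseteq> wcube (a, h)"
  by (auto simp: wcube_def mem_box inner_simps less_imp_le)

lemma wcube_dist:
  assumes "DIM('a::euclidean_space) = Suc n" "x \<in> wcube ((a::'a), h)" "y \<in> wcube (a, h)"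
  shows "dist x y \<le> real (Suc n) * h"
proof -
  have "dist x y = norm (x - y)" by (simp add: dist_norm)
  also have "\<dots> \<le> (\<Sum>b\<in>Basis. \<bar>(x - y) \<bullet> b\<bar>)" by (rule norm_le_l1)
  also have "\<dots> \<le> of_nat (card (Basis::'a set)) * h"
  proof (rule sum_bounded_above)
    fix b :: 'a assume "b \<in> Basis"
    then have "a \<bullet> b < x \<bullet> b" "x \<bullet> b \<le> a \<bullet> b + h" "a \<bullet> b < y \<bullet> b" "y \<bullet> b \<le> a \<bullet> b + h"
      using assms(2,3) by (auto simp: wcube_def)
    then show "\<bar>(x - y) \<bullet> b\<bar> \<le> h" by (simp add: inner_diff_left abs_le_iff)
  qed
  finally show ?thesis using assms(1) by simp
qed

lemma WQ_box_sub:
  fixes P :: "'a::euclidean_space set"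
  assumes dim: "DIM('a) = Suc n" and h: "0 < h"
    and I: "(a, h) \<in> WQ W \<eta> K (k, P)" and K: "1 < K"
    and P: "P \<subseteq> ball z (C1 * dlen (k, P))" "P \<noteq> {}"
  shows "box a (a + h *\<^sub>R One) \<subseteq> cbox (z - ((C1 + sqrt K + 1 + real (Suc n) * sqrt K) * dlen (k, P)) *\<^sub>R One)
                                         (z + ((C1 + sqrt K + 1 + real (Suc n) * sqrt K) * dlen (k, P)) *\<^sub>R One)"
proof
  define l where "l = dlen (k, P)"
  have l: "0 < l" by (simp add: l_def dlen_def)
  have I': "h \<le> sqrt K * l" "setdist (wcube (a, h)) P \<le> sqrt K * l"
    using I by (auto simp: WQ_def l_def)
  have "a + h *\<^sub>R One \<in> wcube (a, h)" using h by (auto simp: wcube_def inner_simps)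
  then have ne: "wcube (a, h) \<noteq> {}" by blast
  have "setdist (wcube (a, h)) P < sqrt K * l + l" using I' l by linarith
  then obtain p q where pq: "p \<in> wcube (a, h)" "q \<in> P" "dist p q < sqrt K * l + l"
    using ne P(2) by (rule setdist_ltE)
  have qz: "dist z q < C1 * l" using P(1) pq(2) by (auto simp: l_def)
  fix y assume "y \<in> box a (a + h *\<^sub>R One)"
  then have "y \<in> wcube (a, h)" using box_in_wcube by blast
  then have "dist y p \<le> real (Suc n) * h" using wcube_dist[OF dim _ pq(1)] by blast
  also have "\<dots> \<le> real (Suc n) * (sqrt K * l)" using I'(1) by (intro mult_left_mono) auto
  finally have "dist y z < (C1 + sqrt K + 1 + real (Suc n) * sqrt K) * l"
    using pq(3) qz dist_triangle[of y z p] dist_triangle[of p z q] by (simp add: dist_commute algebra_simps)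
  then have "\<bar>(y - z) \<bullet> b\<bar> < (C1 + sqrt K + 1 + real (Suc n) * sqrt K) * l" if "b \<in> Basis" for b
    using Basis_le_norm[OF that, of "y - z"] by (simp add: dist_norm)
  then show "y \<in> cbox (z - ((C1 + sqrt K + 1 + real (Suc n) * sqrt K) * dlen (k, P)) *\<^sub>R One)
                      (z + ((C1 + sqrt K + 1 + real (Suc n) * sqrt K) * dlen (k, P)) *\<^sub>R One)"
    unfolding l_def[symmetric] by (force simp: mem_box inner_simps abs_less_iff)
qed

lemma volume_sum:
  fixes F :: "('a::euclidean_space \<times> real) set"
  assumes fin: "finite F" and dim: "DIM('a) = Suc n" and pos: "\<And>I. I \<in> F \<Longrightarrow> snd I > 0"
    and disj: "\<And>I J. I \<in> F \<Longrightarrow> J \<in> F \<Longrightarrow> I \<noteq> J \<Longrightarrow> wcube I \<inter> wcube J = {}"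
    and sub: "\<And>I. I \<in> F \<Longrightarrow> box (fst I) (fst I + snd I *\<^sub>R One) \<subseteq> cbox (z - r *\<^sub>R One) (z + r *\<^sub>R One)"
    and r: "0 \<le> r"
  shows "(\<Sum>I\<in>F. snd I ^ Suc n) \<le> (2 * r) ^ Suc n"
proof -
  let ?B = "\<lambda>I. box (fst I) (fst I + snd I *\<^sub>R One)"
  have "(\<Sum>I\<in>F. snd I ^ Suc n) = (\<Sum>I\<in>F. measure lborel (?B I))"
  proof (rule sum.cong[OF refl])
    fix I assume "I \<in> F"
    then have "0 < snd I" by (rule pos)
    then have "measure lborel (?B I) = (\<Prod>b\<in>(Basis::'a set). snd I)"
      by (subst measure_lborel_box) (auto simp: inner_simps)
    then show "snd I ^ Suc n = measure lborel (?B I)" using dim by simp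
  qed
  also have "\<dots> = measure lborel (\<Union>I\<in>F. ?B I)"
  proof (rule measure_finite_Union[symmetric])
    show "disjoint_family_on ?B F"
      unfolding disjoint_family_on_def
    proof (intro ballI impI)
      fix I J assume "I \<in> F" "J \<in> F" "I \<noteq> J"
      then have "wcube I \<inter> wcube J = {}" by (rule disj)
      then show "?B I \<inter> ?B J = {}"
        using box_in_wcube[of "fst I" "snd I"] box_in_wcube[of "fst J" "snd J"] by auto
    qed
    show "emeasure lborel (?B I) \<noteq> \<infinity>" for I
      using emeasure_lborel_box_finite by (simp add: less_top)
  qed (use fin in auto)
  also have "\<dots> \<le> measure lborel (cbox (z - r *\<^sub>R One) (z + r *\<^sub>R One))"
    by (rule measure_mono_fmeasurable) (use sub fin in \<open>auto intro!: sets.finite_UN\<close>)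
  also have "\<dots> = (2 * r) ^ Suc n"
  proof -
    have "measure lborel (cbox (z - r *\<^sub>R One) (z + r *\<^sub>R One)) = (\<Prod>b\<in>(Basis::'a set). 2 * r)"
      using r by (subst measure_lborel_cbox) (auto simp: inner_simps)
    then show ?thesis using dim by simp
  qed
  finally show ?thesis .
qed

definition Acube :: "nat \<Rightarrow> real" where
  "Acube n = 2 * real (Suc n) * hausdorff_norm (real n) * real n ^ n"

lemma Acube_nonneg: "0 \<le> Acube n"
  unfolding Acube_def using hausdorff_norm_nonneg[of "real n"] by simp

lemma WQ_sum_bound:
  fixes W :: "('a::euclidean_space \<times> real) set" and P :: "'a set"
  assumes dim: "DIM('a) = Suc n" and n1: "1 \<le> n"
    and pos: "\<forall>I\<in>W. snd I > 0"
    and disj: "\<forall>I\<in>W. \<forall>J\<in>W. I \<noteq> J \<longrightarrow> wcube I \<inter> wcube J = {}"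
    and \<eta>: "0 < \<eta>" and K: "1 < K" and C1: "0 \<le> C1"
    and P: "P \<subseteq> ball z (C1 * dlen (k, P))" "P \<noteq> {}"
  shows "(\<Sum>\<^sub>\<infinity>I\<in>WQ W \<eta> K (k, P). hausdorff (real n) (frontier (wcube I)))
     \<le> ennreal (Acube n * (2 * (C1 + sqrt K + 1 + real (Suc n) * sqrt K)) ^ Suc n / \<eta> powr (1/4) * dlen (k, P) ^ n)"
proof (rule infsum_le_finite_sums)
  show "(\<lambda>I. hausdorff (real n) (frontier (wcube I))) summable_on WQ W \<eta> K (k, P)"
    by (rule nonneg_summable_on_complete) auto
  define l where "l = dlen (k, P)"
  define R where "R = C1 + sqrt K + 1 + real (Suc n) * sqrt K"
  have l: "0 < l" by (simp add: l_def dlen_def)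
  have R: "0 \<le> R" using C1 K unfolding R_def by (intro add_nonneg_nonneg mult_nonneg_nonneg) auto
  have el: "0 < \<eta> powr (1/4) * l" using \<eta> l by simp
  fix F assume F: "finite F" "F \<subseteq> WQ W \<eta> K (k, P)"
  then have FW: "F \<subseteq> W" by (auto simp: WQ_def)
  have "(\<Sum>I\<in>F. hausdorff (real n) (frontier (wcube I))) \<le> (\<Sum>I\<in>F. ennreal (Acube n * snd I ^ n))"
  proof (rule sum_mono)
    fix I assume "I \<in> F"
    then have "snd I > 0" using FW pos by auto
    then show "hausdorff (real n) (frontier (wcube I)) \<le> ennreal (Acube n * snd I ^ n)"
      using hausdorff_cube_frontier[OF dim n1, of "snd I" "fst I"] by (simp add: Acube_def)
  qed
  also have "\<dots> = ennreal (\<Sum>I\<in>F. Acube n * snd I ^ n)"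
    using FW pos Acube_nonneg by (intro sum_ennreal) (force intro: mult_nonneg_nonneg)
  also have "(\<Sum>I\<in>F. Acube n * snd I ^ n) \<le> (\<Sum>I\<in>F. Acube n / (\<eta> powr (1/4) * l) * snd I ^ Suc n)"
  proof (rule sum_mono)
    fix I assume I: "I \<in> F"
    then have h: "snd I > 0" "\<eta> powr (1/4) * l \<le> snd I" using FW pos F by (auto simp: WQ_def l_def)
    have "snd I ^ n * (\<eta> powr (1/4) * l) \<le> snd I ^ n * snd I"
      using h by (intro mult_left_mono) auto
    then have "snd I ^ n \<le> snd I ^ Suc n / (\<eta> powr (1/4) * l)"
      using el by (simp add: field_simps)
    then show "Acube n * snd I ^ n \<le> Acube n / (\<eta> powr (1/4) * l) * snd I ^ Suc n"
      using Acube_nonneg mult_left_mono by fastforce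
  qed
  also have "\<dots> = Acube n / (\<eta> powr (1/4) * l) * (\<Sum>I\<in>F. snd I ^ Suc n)"
    by (simp add: sum_distrib_left)
  also have "(\<Sum>I\<in>F. snd I ^ Suc n) \<le> (2 * (R * l)) ^ Suc n"
  proof (rule volume_sum[OF F(1) dim])
    show "snd I > 0" if "I \<in> F" for I using that FW pos by auto
    show "wcube I \<inter> wcube J = {}" if "I \<in> F" "J \<in> F" "I \<noteq> J" for I J
      using that FW disj by auto
    show "box (fst I) (fst I + snd I *\<^sub>R One) \<subseteq> cbox (z - (R * l) *\<^sub>R One) (z + (R * l) *\<^sub>R One)"
      if "I \<in> F" for I
    proof -
      obtain a h where I: "I = (a, h)" by fastforce
      have "h > 0" using that FW pos I by force
      then show ?thesis using WQ_box_sub[OF dim \<open>h > 0\<close> _ K P] that F I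
        by (auto simp: R_def l_def)
    qed
    show "0 \<le> R * l" using R l by simp
  qed
  then have "Acube n / (\<eta> powr (1/4) * l) * (\<Sum>I\<in>F. snd I ^ Suc n) \<le> Acube n / (\<eta> powr (1/4) * l) * (2 * (R * l)) ^ Suc n"
    using el Acube_nonneg by (intro mult_left_mono) auto
  also have "\<dots> = Acube n * (2 * R) ^ Suc n / \<eta> powr (1/4) * l ^ n"
    using l \<eta> by (simp add: power_mult_distrib field_simps)
  finally show "(\<Sum>I\<in>F. hausdorff (real n) (frontier (wcube I)))
     \<le> ennreal (Acube n * (2 * (C1 + sqrt K + 1 + real (Suc n) * sqrt K)) ^ Suc n / \<eta> powr (1/4) * dlen (k, P) ^ n)"
    unfolding R_def l_def by (simp add: ennreal_leI order_trans)
qed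



lemma setdist_point_le:
  assumes "x \<in> ball z r" "P \<subseteq> ball z r" "P \<noteq> {}" "B \<noteq> {}"
  shows "setdist {x} B \<le> setdist P B + 2 * r"
proof -
  have "setdist {x} B - 2 * r \<le> setdist P B"
  proof (rule le_setdistI[OF assms(3,4)])
    fix a b assume ab: "a \<in> P" "b \<in> B"
    have "setdist {x} B \<le> dist x b" using ab by (intro setdist_le_dist) auto
    also have "\<dots> \<le> dist x a + dist a b" by (rule dist_triangle)
    also have "dist x a \<le> dist x z + dist z a" by (rule dist_triangle)
    finally show "setdist {x} B - 2 * r \<le> dist a b"
      using assms(1,2) ab by (auto simp: dist_commute)
  qed
  then show ?thesis by simp
qed

definition mdy :: "real \<Rightarrow> real \<Rightarrow> nat" where
  "mdy C1 c1 = (LEAST m. C1 * 2 powr (- real m) < c1)"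

lemma mdy: assumes "0 < c1" shows "C1 * 2 powr (- real (mdy C1 c1)) < c1"
proof -
  obtain m :: nat where m: "C1 / c1 < 2 ^ m" using real_arch_pow[of 2 "C1 / c1"] by auto
  have "C1 < c1 * 2 ^ m" using m assms by (simp add: field_simps)
  then have "C1 * 2 powr (- real m) < c1"
    by (simp add: powr_minus powr_realpow field_simps)
  then show ?thesis unfolding mdy_def by (rule LeastI)
qed

definition S0 :: "nat \<Rightarrow> real \<Rightarrow> real \<Rightarrow> real \<Rightarrow> real \<Rightarrow> real" where
  "S0 N CA C1 c1 d = real N ^ mdy C1 c1 * CA * (C1 * 2 powr (- real (mdy C1 c1))) powr d"

definition Bfac :: "real \<Rightarrow> real \<Rightarrow> real \<Rightarrow> real \<Rightarrow> nat \<Rightarrow> real" where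
  "Bfac \<kappa> C1 c1 \<gamma> j = (if (\<kappa> + 2 * C1) * 2 powr (- real j) < c1
      then C1 * ((\<kappa> + 2 * C1) * 2 powr (- real j)) powr \<gamma> else 1)"

lemma aux_ineq:
  fixes a u v w c B CA :: real
  assumes "0 < a" "0 < u" "0 < v" "0 < CA" "v * w = 1" "c * (a * u * v / CA) \<le> B * u"
  shows "c \<le> CA * B * w / a"
proof -
  have "c * a * v * u \<le> (B * CA) * u" using assms(6) assms(4) by (simp add: field_simps)
  then have "c * a * v \<le> B * CA" using assms(2) by simp
  moreover have "0 \<le> w"
  proof (rule ccontr)
    assume "\<not> 0 \<le> w"
    then have "v * w < 0" using assms(3) by (simp add: mult_pos_neg)
    then show False using assms(5) by simp
  qed
  ultimately have "c * a * v * w \<le> B * CA * w" by (rule mult_right_mono)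
  then have "c * a \<le> B * CA * w" using assms(5) by (simp add: mult.assoc)
  then show ?thesis using assms(1) by (simp add: field_simps)
qed

locale dsys =
  fixes d CA :: real and E :: "'a::euclidean_space set" and L :: "int set"
    and D :: "int \<Rightarrow> 'a set set" and c1 C1 :: real and N :: nat and \<gamma> :: real
  assumes adr: "ADR d CA E" and ds: "dyadic_system d E L D c1 C1 N \<gamma>" and d0: "0 < d"
begin

lemma dsD: "0 < c1 \<and> c1 \<le> C1 \<and> 0 < \<gamma> \<and>
     (L = UNIV \<or> (\<exists>k0. L = {k0..})) \<and>
     (\<forall>k\<in>L. (\<forall>Q\<in>D k. Q \<in> sets borel \<and> Q \<subseteq> E) \<and> \<Union>(D k) = E \<and>
        (\<forall>Q\<in>D k. \<forall>Q'\<in>D k. Q \<noteq> Q' \<longrightarrow> Q \<inter> Q' = {})) \<and>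
     (\<forall>k\<in>L. \<forall>k'\<in>L. k \<le> k' \<longrightarrow> (\<forall>Q\<in>D k. \<forall>Q'\<in>D k'. Q' \<subseteq> Q \<or> Q' \<inter> Q = {})) \<and>
     (\<forall>k\<in>L. \<forall>Q\<in>D k. \<exists>z\<in>E. ball z (c1 * 2 powr (- k)) \<inter> E \<subseteq> Q \<and>
                              Q \<subseteq> ball z (C1 * 2 powr (- k)) \<inter> E) \<and>
     (\<forall>k\<in>L. \<forall>Q\<in>D k. \<exists>F. F \<subseteq> D (k + 1) \<and> finite F \<and> card F \<le> N \<and> Q = \<Union>F) \<and>
     (\<forall>k\<in>L. \<forall>Q\<in>D k. \<forall>\<rho>. 0 < \<rho> \<and> \<rho> < c1 \<longrightarrow>
        hausdorff d {x\<in>Q. near {x} (E - Q) (\<rho> * 2 powr (- k))}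
          \<le> ennreal (C1 * \<rho> powr \<gamma>) * hausdorff d Q)"
  using ds unfolding dyadic_system_def .

lemma dconsts: "0 < c1" "c1 \<le> C1" "0 < \<gamma>" "1 \<le> CA" "E \<noteq> {}"
proof -
  show "0 < c1" using dsD[THEN conjunct1] .
  show "c1 \<le> C1" using dsD[THEN conjunct2, THEN conjunct1] .
  show "0 < \<gamma>" using dsD[THEN conjunct2, THEN conjunct2, THEN conjunct1] .
  show "1 \<le> CA" using adr[unfolded ADR_def, THEN conjunct1] .
  show "E \<noteq> {}" using adr[unfolded ADR_def, THEN conjunct2, THEN conjunct1] .
qed

lemma adr_bounds:
  assumes "x \<in> E" "0 < r" "below_diam E r"
  shows "ennreal (r powr d / CA) \<le> hausdorff d (ball x r \<inter> E)"
        "hausdorff d (ball x r \<inter> E) \<le> ennreal (CA * r powr d)"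
proof -
  have "\<forall>x\<in>E. \<forall>r. 0 < r \<and> below_diam E r \<longrightarrow>
        ennreal (r powr d / CA) \<le> hausdorff d (ball x r \<inter> E) \<and>
        hausdorff d (ball x r \<inter> E) \<le> ennreal (CA * r powr d)"
    using adr[unfolded ADR_def, THEN conjunct2, THEN conjunct2, THEN conjunct2] .
  then have "ennreal (r powr d / CA) \<le> hausdorff d (ball x r \<inter> E) \<and>
        hausdorff d (ball x r \<inter> E) \<le> ennreal (CA * r powr d)"
    using assms by blast
  then show "ennreal (r powr d / CA) \<le> hausdorff d (ball x r \<inter> E)"
        "hausdorff d (ball x r \<inter> E) \<le> ennreal (CA * r powr d)" by auto
qed

lemma level_up: "k \<in> L \<Longrightarrow> k \<le> k' \<Longrightarrow> k' \<in> L"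
proof -
  assume "k \<in> L" "k \<le> k'"
  from dsD have "L = UNIV \<or> (\<exists>k0. L = {k0..})" by (elim conjE)
  then show "k' \<in> L" using \<open>k \<in> L\<close> \<open>k \<le> k'\<close> by auto
qed

lemmas P5 = dsD[THEN conjunct2, THEN conjunct2, THEN conjunct2, THEN conjunct2, THEN conjunct1]
lemmas P7 = dsD[THEN conjunct2, THEN conjunct2, THEN conjunct2, THEN conjunct2, THEN conjunct2, THEN conjunct2, THEN conjunct1]
lemmas P8 = dsD[THEN conjunct2, THEN conjunct2, THEN conjunct2, THEN conjunct2, THEN conjunct2, THEN conjunct2, THEN conjunct2, THEN conjunct1]
lemmas P9 = dsD[THEN conjunct2, THEN conjunct2, THEN conjunct2, THEN conjunct2, THEN conjunct2, THEN conjunct2, THEN conjunct2, THEN conjunct2]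

lemma cube_sub: "k \<in> L \<Longrightarrow> P \<in> D k \<Longrightarrow> P \<subseteq> E"
proof -
  assume a: "k \<in> L" "P \<in> D k"
  have "\<forall>Q\<in>D k. Q \<in> sets borel \<and> Q \<subseteq> E" using bspec[OF P5 a(1)] by (rule conjunct1)
  then show ?thesis using a(2) by simp
qed

lemma cube_disj: "k \<in> L \<Longrightarrow> P \<in> D k \<Longrightarrow> P' \<in> D k \<Longrightarrow> P \<noteq> P' \<Longrightarrow> P \<inter> P' = {}"
proof -
  assume a: "k \<in> L" "P \<in> D k" "P' \<in> D k" "P \<noteq> P'"
  have "\<forall>Q\<in>D k. \<forall>Q'\<in>D k. Q \<noteq> Q' \<longrightarrow> Q \<inter> Q' = {}" using bspec[OF P5 a(1)] by simp
  then show ?thesis using a by simp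
qed

lemma cube_ball: "k \<in> L \<Longrightarrow> P \<in> D k \<Longrightarrow>
   \<exists>z\<in>E. ball z (c1 * 2 powr (- real_of_int k)) \<inter> E \<subseteq> P \<and> P \<subseteq> ball z (C1 * 2 powr (- real_of_int k)) \<inter> E"
  using bspec[OF bspec[OF P7]] by simp

lemma cube_children: "k \<in> L \<Longrightarrow> P \<in> D k \<Longrightarrow> \<exists>F. F \<subseteq> D (k + 1) \<and> finite F \<and> card F \<le> N \<and> P = \<Union>F"
  by (rule bspec[OF bspec[OF P8]])

lemma cube_thin: "k \<in> L \<Longrightarrow> P \<in> D k \<Longrightarrow> 0 < \<rho> \<Longrightarrow> \<rho> < c1 \<Longrightarrow>
   hausdorff d {x\<in>P. near {x} (E - P) (\<rho> * 2 powr (- real_of_int k))} \<le> ennreal (C1 * \<rho> powr \<gamma>) * hausdorff d P"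
  using bspec[OF bspec[OF P9]] by simp

lemma descendants:
  assumes "k \<in> L" "P \<in> D k"
  shows "\<exists>F. F \<subseteq> D (k + int m) \<and> finite F \<and> card F \<le> N ^ m \<and> P = \<Union>F"
proof (induction m)
  case 0
  then show ?case using assms by (intro exI[of _ "{P}"]) auto
next
  case (Suc m)
  then obtain F where F: "F \<subseteq> D (k + int m)" "finite F" "card F \<le> N ^ m" "P = \<Union>F" by blast
  have km: "k + int m \<in> L" using level_up[OF assms(1)] by simp
  have "\<forall>Q\<in>F. \<exists>G. G \<subseteq> D (k + int m + 1) \<and> finite G \<and> card G \<le> N \<and> Q = \<Union>G"
    using cube_children[OF km] F(1) by blast
  then obtain ch where ch: "\<forall>Q\<in>F. ch Q \<subseteq> D (k + int m + 1) \<and> finite (ch Q) \<and> card (ch Q) \<le> N \<and> Q = \<Union>(ch Q)"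
    by metis
  define F' where "F' = (\<Union>Q\<in>F. ch Q)"
  have eq: "k + int (Suc m) = k + int m + 1" by simp
  have "F' \<subseteq> D (k + int (Suc m))" unfolding eq using ch by (auto simp: F'_def)
  moreover have "finite F'" using ch F(2) by (auto simp: F'_def)
  moreover have "card F' \<le> N ^ Suc m"
  proof -
    have "card F' \<le> (\<Sum>Q\<in>F. card (ch Q))" unfolding F'_def by (rule card_UN_le[OF F(2)])
    also have "\<dots> \<le> (\<Sum>Q\<in>F. N)" using ch by (intro sum_mono) auto
    also have "\<dots> = card F * N" by simp
    also have "\<dots> \<le> N ^ m * N" using F(3) by simp
    finally show ?thesis by (simp add: mult.commute)
  qed
  moreover have "P = \<Union>F'"
  proof -
    have e: "\<Union>(ch Q) = Q" if "Q \<in> F" for Q using ch that by simp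
    have "\<Union>F' = (\<Union>Q\<in>F. \<Union>(ch Q))" unfolding F'_def by auto
    also have "\<dots> = (\<Union>Q\<in>F. Q)" using e by simp
    finally show ?thesis using F(4) by simp
  qed
  ultimately show ?case by blast
qed

lemma proper_size:
  assumes "k \<in> L" "P \<in> D k" "P \<noteq> E" "bounded E"
  shows "c1 * 2 powr (- real_of_int k) \<le> diameter E"
proof (rule ccontr)
  assume "\<not> ?thesis"
  then have lt: "diameter E < c1 * 2 powr (- real_of_int k)" by simp
  obtain z where z: "z \<in> E" "ball z (c1 * 2 powr (- real_of_int k)) \<inter> E \<subseteq> P" using cube_ball[OF assms(1,2)] by blast
  have "E \<subseteq> P"
  proof
    fix x assume "x \<in> E"
    then have "dist z x \<le> diameter E" using z(1) assms(4) by (intro diameter_bounded_bound) auto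
    then show "x \<in> P" using lt z(2) \<open>x \<in> E\<close> by auto
  qed
  then show False using cube_sub[OF assms(1,2)] assms(3) by auto
qed

lemma cube_upper:
  assumes k: "k \<in> L" and P: "P \<in> D k" "P \<noteq> E"
  shows "hausdorff d P \<le> ennreal (S0 N CA C1 c1 d * 2 powr (- real_of_int k * d))"
proof -
  define m0 where "m0 = mdy C1 c1"
  have c1: "0 < c1" "c1 \<le> C1" "1 \<le> CA" using dconsts by auto
  have m0: "C1 * 2 powr (- real m0) < c1" unfolding m0_def using mdy c1 by blast
  obtain F where F: "F \<subseteq> D (k + int m0)" "finite F" "card F \<le> N ^ m0" "P = \<Union>F"
    using descendants[OF k P(1)] by blast
  have km: "k + int m0 \<in> L" using level_up[OF k] by simp
  define r where "r = C1 * 2 powr (- real m0) * 2 powr (- real_of_int k)"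
  have r_eq: "C1 * 2 powr (- real_of_int (k + int m0)) = r"
    by (simp add: r_def powr_add[symmetric] algebra_simps)
  have rpos: "0 < r" using c1 by (simp add: r_def)
  have rlt: "r < c1 * 2 powr (- real_of_int k)" unfolding r_def using m0 by simp
  have bd: "below_diam E r"
  proof (cases "bounded E")
    case True
    then show ?thesis using rlt proper_size[OF k P(1) P(2) True] by (simp add: below_diam_def)
  qed (simp add: below_diam_def)
  have HQ: "hausdorff d Q \<le> ennreal (CA * r powr d)" if "Q \<in> F" for Q
  proof -
    have "Q \<in> D (k + int m0)" using F(1) that by blast
    then obtain z where z: "z \<in> E" "Q \<subseteq> ball z r \<inter> E"
      using cube_ball[OF km] r_eq by metis
    have "hausdorff d Q \<le> hausdorff d (ball z r \<inter> E)" by (rule hausdorff_mono) (rule z(2))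
    also have "\<dots> \<le> ennreal (CA * r powr d)" by (rule adr_bounds(2)[OF z(1) rpos bd])
    finally show ?thesis .
  qed
  have "hausdorff d P \<le> (\<Sum>Q\<in>F. hausdorff d Q)" unfolding F(4) by (rule hausdorff_Union[OF F(2)])
  also have "\<dots> \<le> of_nat (card F) * ennreal (CA * r powr d)" by (rule sum_bounded_above) (rule HQ)
  also have "\<dots> = ennreal (real (card F) * (CA * r powr d))"
    using c1 by (simp add: ennreal_mult ennreal_of_nat_eq_real_of_nat)
  also have "\<dots> \<le> ennreal (real N ^ m0 * (CA * r powr d))"
  proof (rule ennreal_leI, rule mult_right_mono)
    show "real (card F) \<le> real N ^ m0" using F(3) by (metis of_nat_le_iff of_nat_power)
    show "0 \<le> CA * r powr d" using c1 by simp
  qed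
  also have "real N ^ m0 * (CA * r powr d) = S0 N CA C1 c1 d * 2 powr (- real_of_int k * d)"
  proof -
    have "r powr d = (C1 * 2 powr (- real m0)) powr d * 2 powr (- real_of_int k * d)"
      unfolding r_def using c1 by (simp add: powr_mult powr_powr)
    then show ?thesis by (simp add: S0_def m0_def)
  qed
  finally show ?thesis .
qed

lemma count_sub:
  assumes Q: "(k0, P0) \<in> dcubes L D" "P0 \<noteq> E" and \<kappa>: "0 < \<kappa>"
    and G: "finite G" "G \<subseteq> {Q' \<in> dsubcubes L D (k0, P0). near (snd Q') (E - P0) (\<kappa> * dlen Q') \<and> fst Q' = k0 + int j}"
  shows "real (card G) \<le> CA * S0 N CA C1 c1 d * Bfac \<kappa> C1 c1 \<gamma> j * 2 powr (real j * d) / (c1 / 3) powr d"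
proof -
  have c1: "0 < c1" "c1 \<le> C1" "1 \<le> CA" "0 < \<gamma>" using dconsts by auto
  have k0: "k0 \<in> L" "P0 \<in> D k0" using Q by (auto simp: dcubes_def)
  have P0E: "P0 \<subseteq> E" by (rule cube_sub[OF k0])
  have EP0: "E - P0 \<noteq> {}" using P0E Q(2) by blast
  define k where "k = k0 + int j"
  define l where "l = 2 powr (- real_of_int k)"
  have lpos: "0 < l" by (simp add: l_def)
  have Gk: "\<forall>Q'\<in>G. fst Q' = k \<and> k \<in> L \<and> snd Q' \<in> D k \<and> snd Q' \<subseteq> P0 \<and>
       near (snd Q') (E - P0) (\<kappa> * l)"
    using G(2) by (auto simp: dsubcubes_def dcubes_def k_def l_def dlen_def)
  have "\<forall>Q'\<in>G. \<exists>z\<in>E. ball z (c1 * l) \<inter> E \<subseteq> snd Q' \<and> snd Q' \<subseteq> ball z (C1 * l) \<inter> E"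
    using Gk cube_ball unfolding l_def by blast
  then obtain zc where zc: "\<forall>Q'\<in>G. zc Q' \<in> E \<and> ball (zc Q') (c1 * l) \<inter> E \<subseteq> snd Q' \<and> snd Q' \<subseteq> ball (zc Q') (C1 * l) \<inter> E"
    by metis
  define r where "r = c1 * l / 3"
  have rpos: "0 < r" using c1 lpos by (simp add: r_def)
  define Bs where "Bs Q' = ball (zc Q') r \<inter> E" for Q'
  have Bs_sub: "Bs Q' \<subseteq> snd Q'" if "Q' \<in> G" for Q'
  proof -
    have "ball (zc Q') r \<subseteq> ball (zc Q') (c1 * l)" using c1 lpos by (intro subset_ball) (simp add: r_def)
    then show ?thesis using zc that unfolding Bs_def by blast
  qed
  have sep: "r \<le> dist x y" if "Q' \<in> G" "Q'' \<in> G" "Q' \<noteq> Q''" "x \<in> Bs Q'" "y \<in> Bs Q''" for Q' Q'' x y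
  proof -
    have f: "fst Q' = fst Q''" using Gk that(1,2) by simp
    have ne: "snd Q' \<noteq> snd Q''"
    proof
      assume "snd Q' = snd Q''"
      then have "Q' = Q''" using f by (rule_tac prod_eqI) simp_all
      then show False using that(3) by simp
    qed
    have m1: "k \<in> L" "snd Q' \<in> D k" using Gk that(1) by auto
    have m2: "snd Q'' \<in> D k" using Gk that(2) by auto
    have dj: "snd Q' \<inter> snd Q'' = {}" by (rule cube_disj[OF m1 m2 ne])
    have z2: "zc Q'' \<in> snd Q''"
    proof -
      have "zc Q'' \<in> ball (zc Q'') (c1 * l) \<inter> E" using zc that(2) c1 lpos by auto
      then show ?thesis using zc that(2) by blast
    qed
    have "c1 * l \<le> dist (zc Q') (zc Q'')"
    proof (rule ccontr)
      assume "\<not> ?thesis"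
      then have "zc Q'' \<in> ball (zc Q') (c1 * l) \<inter> E" using zc that(2) by auto
      then have "zc Q'' \<in> snd Q'" using zc that(1) by blast
      then show False using z2 dj by blast
    qed
    moreover have "dist (zc Q') x < r" "dist (zc Q'') y < r" using that(4,5) by (auto simp: Bs_def)
    moreover have "dist (zc Q') (zc Q'') \<le> dist (zc Q') x + dist x y + dist y (zc Q'')"
      using dist_triangle[of "zc Q'" "zc Q''" x] dist_triangle[of x "zc Q''" y] by simp
    ultimately show ?thesis by (simp add: r_def dist_commute)
  qed
  have lower: "ennreal (r powr d / CA) \<le> hausdorff d (Bs Q')" if "Q' \<in> G" for Q'
  proof -
    have bd: "below_diam E r"
    proof (cases "bounded E")
      case True
      have "snd Q' \<noteq> E" using Gk that P0E Q(2) by blast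
      then have "c1 * l \<le> diameter E" using proper_size[of k "snd Q'"] Gk that True by (auto simp: l_def)
      then show ?thesis using rpos by (simp add: below_diam_def r_def)
    qed (simp add: below_diam_def)
    show ?thesis unfolding Bs_def by (rule adr_bounds(1)) (use zc that rpos bd in auto)
  qed
  have S0nn': "0 \<le> S0 N CA C1 c1 d" using c1 by (simp add: S0_def)
  have "of_nat (card G) * ennreal (r powr d / CA) \<le> (\<Sum>Q'\<in>G. hausdorff d (Bs Q'))"
    by (rule sum_bounded_below) (rule lower)
  also have "\<dots> \<le> hausdorff d (\<Union>Q'\<in>G. Bs Q')"
    by (rule hausdorff_sep_family[OF G(1) rpos]) (rule sep)
  also have "\<dots> \<le> ennreal (Bfac \<kappa> C1 c1 \<gamma> j * (S0 N CA C1 c1 d * 2 powr (- real_of_int k0 * d)))"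
  proof (cases "(\<kappa> + 2 * C1) * 2 powr (- real j) < c1")
    case True
    define \<rho> where "\<rho> = (\<kappa> + 2 * C1) * 2 powr (- real j)"
    have \<rho>: "0 < \<rho>" "\<rho> < c1" using True \<kappa> c1 by (auto simp: \<rho>_def)
    have "(\<Union>Q'\<in>G. Bs Q') \<subseteq> {x\<in>P0. near {x} (E - P0) (\<rho> * 2 powr (- real_of_int k0))}"
    proof clarify
      fix Q' x assume Q': "Q' \<in> G" and x: "x \<in> Bs Q'"
      have xs: "x \<in> snd Q'" using Bs_sub Q' x by blast
      then have "x \<in> P0" using Gk Q' by blast
      moreover have "near {x} (E - P0) (\<rho> * 2 powr (- real_of_int k0))"
      proof -
        have "r \<le> C1 * l" using c1 lpos unfolding r_def by (simp add: mult_right_mono)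
        moreover have "dist (zc Q') x < r" using x by (simp add: Bs_def)
        ultimately have xb: "x \<in> ball (zc Q') (C1 * l)" by simp
        have sb: "snd Q' \<subseteq> ball (zc Q') (C1 * l)" using zc Q' by auto
        have "setdist {x} (E - P0) \<le> setdist (snd Q') (E - P0) + 2 * (C1 * l)"
          by (rule setdist_point_le[OF xb sb]) (use xs EP0 in auto)
        also have "setdist (snd Q') (E - P0) \<le> \<kappa> * l" using Gk Q' by (auto simp: near_def)
        also have "\<kappa> * l + 2 * (C1 * l) = \<rho> * 2 powr (- real_of_int k0)"
          by (simp add: \<rho>_def l_def k_def powr_add[symmetric] algebra_simps)
        finally show ?thesis using EP0 by (auto simp: near_def)
      qed
      ultimately show "x \<in> P0 \<and> near {x} (E - P0) (\<rho> * 2 powr (- real_of_int k0))" by blast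
    qed
    then have "hausdorff d (\<Union>Q'\<in>G. Bs Q') \<le> hausdorff d {x\<in>P0. near {x} (E - P0) (\<rho> * 2 powr (- real_of_int k0))}"
      by (rule hausdorff_mono)
    also have "\<dots> \<le> ennreal (C1 * \<rho> powr \<gamma>) * hausdorff d P0" by (rule cube_thin[OF k0 \<rho>])
    also have "\<dots> \<le> ennreal (C1 * \<rho> powr \<gamma>) * ennreal (S0 N CA C1 c1 d * 2 powr (- real_of_int k0 * d))"
      by (intro mult_left_mono cube_upper[OF k0 Q(2)]) auto
    also have "\<dots> = ennreal (Bfac \<kappa> C1 c1 \<gamma> j * (S0 N CA C1 c1 d * 2 powr (- real_of_int k0 * d)))"
      using True c1 S0nn' by (simp add: Bfac_def \<rho>_def ennreal_mult[symmetric])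
    finally show ?thesis .
  next
    case False
    have "hausdorff d (\<Union>Q'\<in>G. Bs Q') \<le> hausdorff d P0"
      by (rule hausdorff_mono) (use Bs_sub Gk in blast)
    also have "\<dots> \<le> ennreal (S0 N CA C1 c1 d * 2 powr (- real_of_int k0 * d))" by (rule cube_upper[OF k0 Q(2)])
    finally show ?thesis using False by (simp add: Bfac_def)
  qed
  finally have A0: "of_nat (card G) * ennreal (r powr d / CA)
      \<le> ennreal (Bfac \<kappa> C1 c1 \<gamma> j * (S0 N CA C1 c1 d * 2 powr (- real_of_int k0 * d)))" .
  have "of_nat (card G) * ennreal (r powr d / CA) = ennreal (real (card G) * (r powr d / CA))"
    by (subst ennreal_mult) (use c1 in \<open>auto simp: ennreal_of_nat_eq_real_of_nat\<close>)
  with A0 have A: "ennreal (real (card G) * (r powr d / CA))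
      \<le> ennreal (Bfac \<kappa> C1 c1 \<gamma> j * (S0 N CA C1 c1 d * 2 powr (- real_of_int k0 * d)))" by simp
  have S0nn: "0 \<le> S0 N CA C1 c1 d" using c1 by (simp add: S0_def)
  have Bnn: "0 \<le> Bfac \<kappa> C1 c1 \<gamma> j" using c1 by (simp add: Bfac_def)
  have "real (card G) * (r powr d / CA) \<le> Bfac \<kappa> C1 c1 \<gamma> j * (S0 N CA C1 c1 d * 2 powr (- real_of_int k0 * d))"
    using A S0nn Bnn by (subst (asm) ennreal_le_iff) auto
  moreover have "r powr d = (c1 / 3) powr d * 2 powr (- real_of_int k0 * d) * 2 powr (- real j * d)"
  proof -
    have eq: "r = (c1 / 3) * (2 powr (- real_of_int k0) * 2 powr (- real j))"
      by (simp add: r_def l_def k_def powr_add[symmetric])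
    have "r powr d = (c1 / 3) powr d * ((2 powr (- real_of_int k0)) powr d * (2 powr (- real j)) powr d)"
      unfolding eq using c1 by (subst powr_mult, simp, simp, subst powr_mult) simp_all
    also have "\<dots> = (c1 / 3) powr d * 2 powr (- real_of_int k0 * d) * 2 powr (- real j * d)"
      by (simp only: powr_powr mult.assoc)
    finally show ?thesis .
  qed
  ultimately have R: "real (card G) * ((c1 / 3) powr d * 2 powr (- real_of_int k0 * d) * 2 powr (- real j * d) / CA)
     \<le> (Bfac \<kappa> C1 c1 \<gamma> j * S0 N CA C1 c1 d) * 2 powr (- real_of_int k0 * d)"
    by (simp add: mult.assoc)
  have vw: "2 powr (- real j * d) * 2 powr (real j * d) = 1" by (simp add: powr_add[symmetric])
  have "real (card G) \<le> CA * (Bfac \<kappa> C1 c1 \<gamma> j * S0 N CA C1 c1 d) * 2 powr (real j * d) / (c1 / 3) powr d"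
    by (rule aux_ineq[OF _ _ _ _ vw R]) (use c1 in auto)
  then show ?thesis by (simp add: mult_ac)
qed

end



definition Fm :: "real \<Rightarrow> real \<Rightarrow> real \<Rightarrow> real \<Rightarrow> real" where
  "Fm \<kappa> C1 c1 \<gamma> = C1 * (\<kappa> + 2 * C1) powr \<gamma> + ((\<kappa> + 2 * C1) / c1) powr \<gamma>"

lemma Bfac_le:
  assumes "0 < c1" "c1 \<le> C1" "0 < \<gamma>" "0 < \<kappa>"
  shows "Bfac \<kappa> C1 c1 \<gamma> j \<le> Fm \<kappa> C1 c1 \<gamma> * 2 powr (- real j * \<gamma>)"
proof (cases "(\<kappa> + 2 * C1) * 2 powr (- real j) < c1")
  case True
  have pos: "0 < \<kappa> + 2 * C1" using assms by simp
  have "Bfac \<kappa> C1 c1 \<gamma> j = C1 * (\<kappa> + 2 * C1) powr \<gamma> * 2 powr (- real j * \<gamma>)"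
    using True pos by (simp add: Bfac_def powr_mult powr_powr)
  also have "\<dots> \<le> Fm \<kappa> C1 c1 \<gamma> * 2 powr (- real j * \<gamma>)"
    unfolding Fm_def by (intro mult_right_mono) auto
  finally show ?thesis .
next
  case False
  then have "c1 \<le> (\<kappa> + 2 * C1) * 2 powr (- real j)" by simp
  then have "2 powr (real j) \<le> (\<kappa> + 2 * C1) / c1"
    using assms by (simp add: field_simps powr_minus)
  then have "(2 powr (real j)) powr \<gamma> \<le> ((\<kappa> + 2 * C1) / c1) powr \<gamma>"
    using assms by (intro powr_mono2) auto
  then have "2 powr (real j * \<gamma>) \<le> ((\<kappa> + 2 * C1) / c1) powr \<gamma>" by (simp add: powr_powr)
  then have "1 \<le> ((\<kappa> + 2 * C1) / c1) powr \<gamma> * 2 powr (- real j * \<gamma>)"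
    by (simp add: powr_minus field_simps)
  also have "\<dots> \<le> Fm \<kappa> C1 c1 \<gamma> * 2 powr (- real j * \<gamma>)"
    unfolding Fm_def using assms by (intro mult_right_mono) auto
  finally show ?thesis using False by (simp add: Bfac_def)
qed

context dsys
begin

lemma count_level:
  assumes Q: "(k0, P0) \<in> dcubes L D" "P0 \<noteq> E" and \<kappa>: "0 < \<kappa>"
  shows "finite {Q' \<in> dsubcubes L D (k0, P0). near (snd Q') (E - P0) (\<kappa> * dlen Q') \<and> fst Q' = k0 + int j}
    \<and> real (card {Q' \<in> dsubcubes L D (k0, P0). near (snd Q') (E - P0) (\<kappa> * dlen Q') \<and> fst Q' = k0 + int j})
       \<le> CA * S0 N CA C1 c1 d * Bfac \<kappa> C1 c1 \<gamma> j * 2 powr (real j * d) / (c1 / 3) powr d"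
    (is "finite ?S \<and> _ \<le> ?B")
proof
  show fin: "finite ?S"
  proof (rule ccontr)
    assume "infinite ?S"
    then obtain G where G: "finite G" "card G = nat \<lceil>?B\<rceil> + 1" "G \<subseteq> ?S"
      using infinite_arbitrarily_large by blast
    have "real (card G) \<le> ?B" by (rule count_sub[OF Q \<kappa> G(1,3)])
    moreover have "?B < real (card G)" unfolding G(2) by linarith
    ultimately show False by simp
  qed
  show "real (card ?S) \<le> ?B" by (rule count_sub[OF Q \<kappa> fin order_refl])
qed

lemma level_term:
  assumes \<kappa>: "0 < \<kappa>" and M: "0 \<le> M" and card: "real c \<le> CA * S0 N CA C1 c1 d * Bfac \<kappa> C1 c1 \<gamma> j * 2 powr (real j * d) / (c1 / 3) powr d"
  shows "real c * (M * (2 powr (- real_of_int (k0 + int j))) ^ n)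
     \<le> (M * CA * S0 N CA C1 c1 d * Fm \<kappa> C1 c1 \<gamma> / (c1 / 3) powr d) * (2 powr (d - \<gamma> - real n)) ^ j * (2 powr (- real_of_int k0)) ^ n"
proof -
  have c1: "0 < c1" "c1 \<le> C1" "1 \<le> CA" "0 < \<gamma>" using dconsts by auto
  have S0nn: "0 \<le> S0 N CA C1 c1 d" using c1 by (simp add: S0_def)
  define a where "a = (c1 / 3) powr d"
  have a: "0 < a" using c1 by (simp add: a_def)
  have Mt: "0 \<le> M * (2 powr (- real_of_int (k0 + int j))) ^ n" using M by simp
  have "real c * (M * (2 powr (- real_of_int (k0 + int j))) ^ n)
      \<le> (CA * S0 N CA C1 c1 d * Bfac \<kappa> C1 c1 \<gamma> j * 2 powr (real j * d) / a) * (M * (2 powr (- real_of_int (k0 + int j))) ^ n)"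
    using card Mt unfolding a_def by (rule mult_right_mono)
  also have "\<dots> \<le> (CA * S0 N CA C1 c1 d * (Fm \<kappa> C1 c1 \<gamma> * 2 powr (- real j * \<gamma>)) * 2 powr (real j * d) / a) * (M * (2 powr (- real_of_int (k0 + int j))) ^ n)"
    using Bfac_le[OF c1(1,2,4) \<kappa>, of j] c1 S0nn a Mt
    by (intro mult_right_mono divide_right_mono mult_left_mono) auto
  also have "\<dots> = (M * CA * S0 N CA C1 c1 d * Fm \<kappa> C1 c1 \<gamma> / a) *
       (2 powr (- real j * \<gamma>) * 2 powr (real j * d) * (2 powr (- real_of_int (k0 + int j))) ^ n)"
    by (simp add: field_simps)
  also have "2 powr (- real j * \<gamma>) * 2 powr (real j * d) * (2 powr (- real_of_int (k0 + int j))) ^ n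
      = (2 powr (d - \<gamma> - real n)) ^ j * (2 powr (- real_of_int k0)) ^ n"
  proof -
    have "(2 powr (- real_of_int (k0 + int j))) ^ n = 2 powr (- real_of_int (k0 + int j) * real n)"
      by (simp add: powr_realpow[symmetric] powr_powr)
    moreover have "(2 powr (d - \<gamma> - real n)) ^ j = 2 powr ((d - \<gamma> - real n) * real j)"
      by (simp add: powr_realpow[symmetric] powr_powr)
    moreover have "(2 powr (- real_of_int k0)) ^ n = 2 powr (- real_of_int k0 * real n)"
      by (simp add: powr_realpow[symmetric] powr_powr)
    ultimately show ?thesis by (simp add: powr_add[symmetric] algebra_simps)
  qed
  finally show ?thesis unfolding a_def by (simp add: mult.assoc)
qed

lemma sum_bound:
  fixes g :: "int \<times> 'a set \<Rightarrow> ennreal"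
  assumes Q: "(k0, P0) \<in> dcubes L D" and \<kappa>: "0 < \<kappa>" and M: "0 \<le> M" and n: "d \<le> real n"
    and g: "\<And>Q'. Q' \<in> dcubes L D \<Longrightarrow> g Q' \<le> ennreal (M * dlen Q' ^ n)"
  shows "(\<Sum>\<^sub>\<infinity>Q'\<in>{Q' \<in> dsubcubes L D (k0, P0). near (snd Q') (E - P0) (\<kappa> * dlen Q')}. g Q')
     \<le> ennreal ((M * CA * S0 N CA C1 c1 d * Fm \<kappa> C1 c1 \<gamma> / (c1 / 3) powr d) / (1 - 2 powr (d - \<gamma> - real n)) * dlen (k0, P0) ^ n)"
proof -
  let ?S = "{Q' \<in> dsubcubes L D (k0, P0). near (snd Q') (E - P0) (\<kappa> * dlen Q')}"
  define Kc where "Kc = M * CA * S0 N CA C1 c1 d * Fm \<kappa> C1 c1 \<gamma> / (c1 / 3) powr d"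
  define q where "q = 2 powr (d - \<gamma> - real n)"
  have c1: "0 < c1" "c1 \<le> C1" "1 \<le> CA" "0 < \<gamma>" using dconsts by auto
  have "2 powr (d - \<gamma> - real n) < 2 powr 0" by (rule powr_less_mono) (use c1 n in auto)
  then have q: "0 < q" "q < 1" by (auto simp: q_def)
  have Kc: "0 \<le> Kc" using c1 M \<kappa> by (simp add: Kc_def S0_def Fm_def)
  show ?thesis
  proof (cases "E - P0 = {}")
    case True
    then have "?S = {}" by (auto simp: near_def)
    then show ?thesis by (simp only: infsum_empty zero_le)
  next
    case False
    have k0: "k0 \<in> L" "P0 \<in> D k0" using Q by (auto simp: dcubes_def)
    have P0E: "P0 \<noteq> E" using False by blast
    have "(\<Sum>\<^sub>\<infinity>Q'\<in>?S. g Q') \<le> (\<Sum>\<^sub>\<infinity>Q'\<in>?S. ennreal (M * dlen Q' ^ n))"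
      by (rule infsum_mono) (auto intro!: nonneg_summable_on_complete g simp: dsubcubes_def)
    also have "\<dots> \<le> ennreal (Kc / (1 - q) * dlen (k0, P0) ^ n)"
    proof (rule infsum_le_finite_sums)
      show "(\<lambda>Q'. ennreal (M * dlen Q' ^ n)) summable_on ?S" by (rule nonneg_summable_on_complete) auto
      fix G assume G: "finite G" "G \<subseteq> ?S"
      define jf where "jf Q' = nat (fst Q' - k0)" for Q' :: "int \<times> 'a set"
      have jfe: "fst Q' = k0 + int (jf Q')" if "Q' \<in> G" for Q'
        using G(2) that by (auto simp: jf_def dsubcubes_def)
      have "(\<Sum>Q'\<in>G. ennreal (M * dlen Q' ^ n)) = ennreal (\<Sum>Q'\<in>G. M * dlen Q' ^ n)"
        using M by (intro sum_ennreal) (simp add: dlen_def)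
      also have "(\<Sum>Q'\<in>G. M * dlen Q' ^ n) = (\<Sum>j\<in>jf ` G. \<Sum>Q'\<in>{Q'\<in>G. jf Q' = j}. M * dlen Q' ^ n)"
        by (rule sum.group[symmetric]) (use G in auto)
      also have "\<dots> \<le> (\<Sum>j\<in>jf ` G. Kc * q ^ j * dlen (k0, P0) ^ n)"
      proof (rule sum_mono)
        fix j assume "j \<in> jf ` G"
        let ?Sj = "{Q' \<in> dsubcubes L D (k0, P0). near (snd Q') (E - P0) (\<kappa> * dlen Q') \<and> fst Q' = k0 + int j}"
        have Gj: "{Q'\<in>G. jf Q' = j} \<subseteq> ?Sj" using G(2) jfe by auto
        have cl: "finite ?Sj \<and> real (card ?Sj) \<le> CA * S0 N CA C1 c1 d * Bfac \<kappa> C1 c1 \<gamma> j * 2 powr (real j * d) / (c1 / 3) powr d"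
          by (rule count_level[OF Q P0E \<kappa>])
        have cG: "real (card {Q'\<in>G. jf Q' = j}) \<le> CA * S0 N CA C1 c1 d * Bfac \<kappa> C1 c1 \<gamma> j * 2 powr (real j * d) / (c1 / 3) powr d"
          using card_mono[OF conjunct1[OF cl] Gj] conjunct2[OF cl] by linarith
        have "(\<Sum>Q'\<in>{Q'\<in>G. jf Q' = j}. M * dlen Q' ^ n) = (\<Sum>Q'\<in>{Q'\<in>G. jf Q' = j}. M * (2 powr (- real_of_int (k0 + int j))) ^ n)"
        proof (rule sum.cong[OF refl])
          fix Q' assume "Q' \<in> {Q'\<in>G. jf Q' = j}"
          then have "fst Q' = k0 + int j" using jfe by auto
          then show "M * dlen Q' ^ n = M * (2 powr (- real_of_int (k0 + int j))) ^ n"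
            by (cases Q') (simp add: dlen_def)
        qed
        also have "\<dots> = real (card {Q'\<in>G. jf Q' = j}) * (M * (2 powr (- real_of_int (k0 + int j))) ^ n)" by simp
        also have "\<dots> \<le> Kc * q ^ j * (2 powr (- real_of_int k0)) ^ n"
          unfolding Kc_def q_def by (rule level_term[OF \<kappa> M cG])
        finally show "(\<Sum>Q'\<in>{Q'\<in>G. jf Q' = j}. M * dlen Q' ^ n) \<le> Kc * q ^ j * dlen (k0, P0) ^ n"
          by (simp add: dlen_def)
      qed
      also have "\<dots> = Kc * dlen (k0, P0) ^ n * (\<Sum>j\<in>jf ` G. q ^ j)"
        by (simp add: sum_distrib_left sum_distrib_right mult_ac)
      also have "\<dots> \<le> Kc * dlen (k0, P0) ^ n * (1 / (1 - q))"
      proof (rule mult_left_mono)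
        have "(\<Sum>j\<in>jf ` G. q ^ j) \<le> (\<Sum>j. q ^ j)"
          by (rule sum_le_suminf) (use q G in \<open>auto intro: summable_geometric\<close>)
        also have "\<dots> = 1 / (1 - q)" using q by (simp add: suminf_geometric)
        finally show "(\<Sum>j\<in>jf ` G. q ^ j) \<le> 1 / (1 - q)" .
        show "0 \<le> Kc * dlen (k0, P0) ^ n" using Kc by (simp add: dlen_def)
      qed
      also have "\<dots> = Kc / (1 - q) * dlen (k0, P0) ^ n" by simp
      finally show "(\<Sum>Q'\<in>G. ennreal (M * dlen Q' ^ n)) \<le> ennreal (Kc / (1 - q) * dlen (k0, P0) ^ n)"
        by (simp add: ennreal_leI)
    qed
    finally show ?thesis unfolding Kc_def q_def .
  qed
qed

end



theorem lemma7p6: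
  fixes n :: nat and d CA c1 C1 \<gamma> \<eta> K \<kappa> :: real and N :: nat
  assumes "DIM('a::euclidean_space) = Suc n"
    and "0 < d" and "d \<le> real n"
    and "0 < \<eta>" and "\<eta> < 1" and "1 < K" and "0 < \<kappa>"
  shows "\<exists>C::real. \<forall>(\<Omega>::'a set) L D W.
     open \<Omega> \<and> corkscrew \<Omega> \<and> ADR d CA (frontier \<Omega>) \<and>
     dyadic_system d (frontier \<Omega>) L D c1 C1 N \<gamma> \<and> whitney \<Omega> W \<longrightarrow>
     (\<forall>Q\<in>dcubes L D.
        (\<Sum>\<^sub>\<infinity>Q'\<in>{Q' \<in> dsubcubes L D Q. near (snd Q') (frontier \<Omega> - snd Q) (\<kappa> * dlen Q')}.
           \<Sum>\<^sub>\<infinity>I\<in>WQ W \<eta> K Q'. hausdorff (real n) (frontier (wcube I)))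
        \<le> ennreal (C * dlen Q ^ n))"
proof -
  note dim = assms(1)
  have n1: "1 \<le> n" using assms(2,3) by linarith
  define M where "M = Acube n * (2 * (C1 + sqrt K + 1 + real (Suc n) * sqrt K)) ^ Suc n / \<eta> powr (1/4)"
  define C where "C = (M * CA * S0 N CA C1 c1 d * Fm \<kappa> C1 c1 \<gamma> / (c1 / 3) powr d) / (1 - 2 powr (d - \<gamma> - real n))"
  show ?thesis
  proof (rule exI[of _ C], intro allI impI ballI)
    fix \<Omega> :: "'a set" and L D W Q
    assume H: "open \<Omega> \<and> corkscrew \<Omega> \<and> ADR d CA (frontier \<Omega>) \<and>
       dyadic_system d (frontier \<Omega>) L D c1 C1 N \<gamma> \<and> whitney \<Omega> W"
      and Q: "Q \<in> dcubes L D"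
    then have adr: "ADR d CA (frontier \<Omega>)" and dsy: "dyadic_system d (frontier \<Omega>) L D c1 C1 N \<gamma>"
      and wh: "whitney \<Omega> W" by auto
    interpret dsys d CA "frontier \<Omega>" L D c1 C1 N \<gamma>
      using adr dsy assms(2) by unfold_locales
    have c1: "0 < c1" "c1 \<le> C1" using dconsts by auto
    have pos: "\<forall>I\<in>W. snd I > 0" using wh unfolding whitney_def by blast
    have disj: "\<forall>I\<in>W. \<forall>J\<in>W. I \<noteq> J \<longrightarrow> wcube I \<inter> wcube J = {}" using wh unfolding whitney_def by blast
    have M: "0 \<le> M" unfolding M_def using Acube_nonneg[of n] c1 assms(6)
      by (intro divide_nonneg_nonneg mult_nonneg_nonneg zero_le_power add_nonneg_nonneg) auto
    obtain k0 P0 where Q0: "Q = (k0, P0)" by fastforce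
    have g: "(\<Sum>\<^sub>\<infinity>I\<in>WQ W \<eta> K Q'. hausdorff (real n) (frontier (wcube I))) \<le> ennreal (M * dlen Q' ^ n)"
      if "Q' \<in> dcubes L D" for Q'
    proof -
      obtain k P where kP: "Q' = (k, P)" by fastforce
      have "k \<in> L" "P \<in> D k" using that kP by (auto simp: dcubes_def)
      then obtain z where z: "z \<in> frontier \<Omega>" "ball z (c1 * 2 powr (- real_of_int k)) \<inter> frontier \<Omega> \<subseteq> P"
          "P \<subseteq> ball z (C1 * 2 powr (- real_of_int k)) \<inter> frontier \<Omega>"
        using cube_ball by blast
      have "z \<in> P" using z(1,2) c1 by auto
      then have Pne: "P \<noteq> {}" by blast
      have Pb: "P \<subseteq> ball z (C1 * dlen (k, P))" using z(3) by (auto simp: dlen_def)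
      show ?thesis unfolding kP M_def
        by (rule WQ_sum_bound[OF dim n1 pos disj assms(4) assms(6) _ Pb Pne]) (use c1 in linarith)
    qed
    show "(\<Sum>\<^sub>\<infinity>Q'\<in>{Q' \<in> dsubcubes L D Q. near (snd Q') (frontier \<Omega> - snd Q) (\<kappa> * dlen Q')}.
           \<Sum>\<^sub>\<infinity>I\<in>WQ W \<eta> K Q'. hausdorff (real n) (frontier (wcube I)))
        \<le> ennreal (C * dlen Q ^ n)"
      unfolding Q0 snd_conv C_def
      by (rule sum_bound[OF Q[unfolded Q0] assms(7) M assms(3)]) (rule g)
  qed
qed


end
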